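(* Let $S=\{x_1,\dots,x_N\}\subset\mathbb{R}^n$ be a two-distance tight frame for $\mathbb{R}^n$ whose two inner products $a\neq b$ satisfy $a\neq -b$ (i.e. $S$ is not equiangular). Let $\Gamma_1$ be the graph on $\{1,\dots,N\}$ in which $i\neq j$ are adjacent iff $\langle x_i,x_j\rangle=a$. Then $\Gamma_1$ is a strongly regular graph, and exactly one of the following holds: (i) $\sum_i x_i=0$; then $S$ is a spherical $2$-design in $\mathbb{R}^n$, and (if $\Gamma_1$ is neither complete nor empty) the Gram matrix of $S$ coincides with the Gram matrix of $S_1(\Gamma_1)$, of $S_2(\Gamma_1)$, or of a regular simplex of $N$ points in $\mathbb{R}^{N-1}$ (all inner products $-1/(N-1)$); (ii) $s=\sum_i x_i\neq 0$; then $\|s\|^2=N^2/n$, and the vectors $y_i=(x_i-s/N)/\sqrt{1-1/n}$ are unit vectors in the hyperplane $s^\perp\cong\mathbb{R}^{n-1}$ forming a two-distance spherical $2$-design there (a "shifted $2$-design"), which is then of the type described in (i) (with $n-1$ in place of $n$). Conversely, for every strongly regular graph $\Gamma_1$ on $N$ vertices that is neither complete nor empty, each of the three $2$-designs $S_1(\Gamma_1)$, $S_2(\Gamma_1)$, and the regular simplex of $N$ points in $\mathbb{R}^{N-1}$ is a two-distance tight frame for its $m$-dimensional span, and for each such design $T=\{y_1,\dots,y_N\}\subset\mathbb{R}^m$ the set $\{\sqrt{1-1/(m+1)}\,y_i+u\}_{i=1}^N\subset\mathbb{R}^{m+1}$, where $u$ is orthogonal to $\mathbb{R}^m$ with $\|u\|=1/\sqrt{m+1}$,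 is again a two-distance tight frame for $\mathbb{R}^{m+1}$; thus every such graph yields six two-distance tight frames.
   Context: A finite set of unit vectors $S\subset\mathbb{R}^n$ is a spherical two-distance set if there are two real numbers $a,b$ such that the inner product of any two distinct vectors of $S$ is $a$ or $b$. A finite set $\{x_1,\dots,x_N\}$ of unit vectors is a (unit-norm) tight frame for $\mathbb{R}^n$ if there is $A>0$ with $\sum_{i=1}^N\langle x,x_i\rangle^2=A\|x\|^2$ for all $x\in\mathbb{R}^n$ (then $A=N/n$). A two-distance tight frame is a unit-norm tight frame that is a spherical two-distance set. A set of unit vectors $\{x_1,\dots,x_N\}\subset\mathbb{R}^n$ is a spherical $2$-design if $\sum_i x_i=0$ and $\sum_{i,j}\langle x_i,x_j\rangle^2=N^2/n$ (equivalently, $\sum_i x_i=0$ and it is a unit-norm tight frame for $\mathbb{R}^n$). A strongly regular graph $\mathrm{SRG}(v,k,\lambda,\mu)$ is a $k$-regular graph on $v$ vertices in which any two adjacent vertices have $\lambda$ common neighbours and any two nonadjacent vertices have $\mu$ common neighbours. For a strongly regular graph $\Gamma_1$ on $N$ vertices, neither complete nor empty, with adjacency matrix $\Phi_1$, the space $\mathbf{1}^\perp\subset\mathbb{R}^N$ ($\mathbf{1}$ the all-ones vector) decomposes as an orthogonal sum of two eigenspaces $E_1,E_2$ of $\Phi_1$ (eigenvalues $r_1> r_2$). $S_j(\Gamma_1)$ ($j=1,2$) denotes the set obtained by orthogonally projecting the standard basis vectors $e_1,\dots,e_N$ of $\mathbb{R}^N$ onto $E_j$ and normalizing each projection to unit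 length (the Delsarte–Goethals–Seidel spherical embedding); it is a spherical two-distance set in $E_j$ whose vertex $i$ corresponds to $e_i$. *)

theory Defs
  imports "HOL-Analysis.Analysis"
begin

text \<open>Families of vectors indexed by a finite type 'i (N = CARD('i)).
  A subspace V of a Euclidean space plays the role of R^m, m = dim V.\<close>

definition unit_in :: "'a::euclidean_space set \<Rightarrow> ('i \<Rightarrow> 'a) \<Rightarrow> bool" where
  "unit_in V x \<longleftrightarrow> (\<forall>i. norm (x i) = 1 \<and> x i \<in> V)"

definition tight_frame_on :: "'a::euclidean_space set \<Rightarrow> ('i::finite \<Rightarrow> 'a) \<Rightarrow> bool" where
  "tight_frame_on V x \<longleftrightarrow> unit_in V x \<and>
     (\<exists>A>0. \<forall>v\<in>V. (\<Sum>i\<in>UNIV. (v \<bullet> x i)^2) = A * (norm v)^2)"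

definition two_distance :: "('i \<Rightarrow> 'a::euclidean_space) \<Rightarrow> bool" where
  "two_distance x \<longleftrightarrow> (\<forall>i. norm (x i) = 1) \<and>
     (\<exists>a b. \<forall>i j. i \<noteq> j \<longrightarrow> x i \<bullet> x j = a \<or> x i \<bullet> x j = b)"

definition two_distance_tight_frame_on :: "'a::euclidean_space set \<Rightarrow> ('i::finite \<Rightarrow> 'a) \<Rightarrow> bool" where
  "two_distance_tight_frame_on V x \<longleftrightarrow> tight_frame_on V x \<and> two_distance x"

definition spherical_2design_on :: "'a::euclidean_space set \<Rightarrow> ('i::finite \<Rightarrow> 'a) \<Rightarrow> bool" where
  "spherical_2design_on V x \<longleftrightarrow> unit_in V x \<and> (\<Sum>i\<in>UNIV. x i) = 0 \<and>
     (\<Sum>i\<in>UNIV. \<Sum>j\<in>UNIV. (x i \<bullet> x j)^2) = (real CARD('i))^2 / real (dim V)"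

definition srg :: "('v::finite \<Rightarrow> 'v \<Rightarrow> bool) \<Rightarrow> bool" where
  "srg adj \<longleftrightarrow> (\<forall>u w. adj u w \<longleftrightarrow> adj w u) \<and> (\<forall>u. \<not> adj u u) \<and>
     (\<exists>k l m. (\<forall>u. card {w. adj u w} = k) \<and>
       (\<forall>u w. u \<noteq> w \<and> adj u w \<longrightarrow> card {z. adj u z \<and> adj w z} = l) \<and>
       (\<forall>u w. u \<noteq> w \<and> \<not> adj u w \<longrightarrow> card {z. adj u z \<and> adj w z} = m))"

definition complete_graph :: "('v \<Rightarrow> 'v \<Rightarrow> bool) \<Rightarrow> bool" where
  "complete_graph adj \<longleftrightarrow> (\<forall>u w. u \<noteq> w \<longrightarrow> adj u w)"

definition empty_graph :: "('v \<Rightarrow> 'v \<Rightarrow> bool) \<Rightarrow> bool" where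
  "empty_graph adj \<longleftrightarrow> (\<forall>u w. \<not> adj u w)"

definition adj_matrix :: "('v::finite \<Rightarrow> 'v \<Rightarrow> bool) \<Rightarrow> real^'v^'v" where
  "adj_matrix adj = (\<chi> i j. if adj i j then 1 else 0)"

definition eigs_perp :: "('v::finite \<Rightarrow> 'v \<Rightarrow> bool) \<Rightarrow> real set" where
  "eigs_perp adj = {r. \<exists>v::real^'v. v \<noteq> 0 \<and> v \<bullet> vec 1 = 0 \<and> adj_matrix adj *v v = r *\<^sub>R v}"

definition srg_eigval :: "('v::finite \<Rightarrow> 'v \<Rightarrow> bool) \<Rightarrow> nat \<Rightarrow> real" where
  "srg_eigval adj j = (if j = 1 then Max (eigs_perp adj) else Min (eigs_perp adj))"

definition srg_eigspace :: "('v::finite \<Rightarrow> 'v \<Rightarrow> bool) \<Rightarrow> nat \<Rightarrow> (real^'v) set" where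
  "srg_eigspace adj j = {v. v \<bullet> vec 1 = 0 \<and> adj_matrix adj *v v = srg_eigval adj j *\<^sub>R v}"

text \<open>S_j(Gamma): normalized orthogonal projections of the standard basis vectors onto E_j
  (the Delsarte-Goethals-Seidel spherical embedding); vertex i corresponds to e_i.\<close>
definition dgs_embedding :: "('v::finite \<Rightarrow> 'v \<Rightarrow> bool) \<Rightarrow> nat \<Rightarrow> 'v \<Rightarrow> real^'v" where
  "dgs_embedding adj j i =
     (let p = closest_point (srg_eigspace adj j) (axis i 1) in p /\<^sub>R norm p)"

definition same_gram :: "('i \<Rightarrow> 'a::real_inner) \<Rightarrow> ('i \<Rightarrow> 'b::real_inner) \<Rightarrow> bool" where
  "same_gram x y \<longleftrightarrow> (\<forall>i j. x i \<bullet> x j = y i \<bullet> y j)"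

definition simplex_gram :: "('i::finite \<Rightarrow> 'a::real_inner) \<Rightarrow> bool" where
  "simplex_gram x \<longleftrightarrow> (\<forall>i j. x i \<bullet> x j = (if i = j then 1 else - 1 / (real CARD('i) - 1)))"

definition design_type :: "'a::euclidean_space set \<Rightarrow> ('v::finite \<Rightarrow> 'a) \<Rightarrow> ('v \<Rightarrow> 'v \<Rightarrow> bool) \<Rightarrow> bool" where
  "design_type V x adj \<longleftrightarrow> spherical_2design_on V x \<and>
     (\<not> complete_graph adj \<and> \<not> empty_graph adj \<longrightarrow>
        same_gram x (dgs_embedding adj 1) \<or> same_gram x (dgs_embedding adj 2) \<or> simplex_gram x)"

definition lifting_property :: "('i::finite \<Rightarrow> 'a::euclidean_space) \<Rightarrow> bool" where
  "lifting_property T \<longleftrightarrow>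
     (let V = span (range T); m = dim V in
      \<forall>u. (\<forall>w\<in>V. u \<bullet> w = 0) \<and> norm u = 1 / sqrt (real m + 1) \<longrightarrow>
        two_distance_tight_frame_on (span (insert u V))
          (\<lambda>i. sqrt (1 - 1 / (real m + 1)) *\<^sub>R T i + u))"

end

theory Submission
  imports Defs
begin

lemma parseval:
  fixes B :: "'a::euclidean_space set"
  assumes fin: "finite B" and po: "pairwise orthogonal B" and nb: "\<And>b. b \<in> B \<Longrightarrow> norm b = 1"
    and x: "x \<in> span B"
  shows "(norm x)^2 = (\<Sum>b\<in>B. (x \<bullet> b)^2)"
proof -
  define y where "y = x - (\<Sum>b\<in>B. (x \<bullet> b) *\<^sub>R b)"
  have ysp: "y \<in> span B" unfolding y_def
    by (intro span_diff x span_sum span_scale span_base)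
  have bb: "b \<bullet> b = 1" if "b \<in> B" for b
    using nb[OF that] by (simp add: norm_eq_1)
  have orth: "c \<bullet> b = 0" if "c \<in> B" "b \<in> B" "c \<noteq> b" for b c
    using po that unfolding pairwise_def orthogonal_def by blast
  have yb: "y \<bullet> b = 0" if b: "b \<in> B" for b
  proof -
    have "(\<Sum>c\<in>B. (x \<bullet> c) *\<^sub>R c) \<bullet> b = (\<Sum>c\<in>B. (x \<bullet> c) * (c \<bullet> b))"
      by (simp add: inner_sum_left)
    also have "\<dots> = (\<Sum>c\<in>B. if c = b then x \<bullet> b else 0)"
      by (rule sum.cong) (auto simp: bb orth b)
    also have "\<dots> = x \<bullet> b" using fin b by simp
    finally show ?thesis by (simp add: y_def inner_diff_left)
  qed
  have "orthogonal y y"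
    by (rule orthogonal_to_span[OF ysp]) (simp add: orthogonal_def yb)
  hence "y = 0" by (simp add: orthogonal_def)
  hence xe: "x = (\<Sum>b\<in>B. (x \<bullet> b) *\<^sub>R b)" by (simp add: y_def)
  have "(norm x)^2 = x \<bullet> x" by (simp add: power2_norm_eq_inner)
  also have "\<dots> = x \<bullet> (\<Sum>b\<in>B. (x \<bullet> b) *\<^sub>R b)" using xe by simp
  also have "\<dots> = (\<Sum>b\<in>B. (x \<bullet> b)^2)" by (simp add: inner_sum_right power2_eq_square)
  finally show ?thesis .
qed

lemma frame_dim:
  fixes x :: "'i::finite \<Rightarrow> 'a::euclidean_space"
  assumes V: "subspace V" and u: "unit_in V x"
    and fr: "\<forall>v\<in>V. (\<Sum>i\<in>UNIV. (v \<bullet> x i)^2) = C * (norm v)^2"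
  shows "C * real (dim V) = real CARD('i)"
proof -
  obtain B where B: "B \<subseteq> V" "pairwise orthogonal B" "\<And>x. x \<in> B \<Longrightarrow> norm x = 1"
    "independent B" "card B = dim V" "span B = V"
    using orthonormal_basis_subspace[OF V] by metis
  have fin: "finite B" using B(4) independent_imp_finite by blast
  have "C * real (dim V) = (\<Sum>b\<in>B. C * (norm b)^2)" using B by simp
  also have "\<dots> = (\<Sum>b\<in>B. \<Sum>i\<in>UNIV. (b \<bullet> x i)^2)"
    using fr B(1) by (intro sum.cong) auto
  also have "\<dots> = (\<Sum>i\<in>UNIV. \<Sum>b\<in>B. (x i \<bullet> b)^2)"
    by (subst sum.swap) (simp add: inner_commute)
  also have "\<dots> = (\<Sum>i\<in>UNIV. (norm (x i))^2)"
  proof -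
    have "\<forall>i. (norm (x i))^2 = (\<Sum>b\<in>B. (x i \<bullet> b)^2)"
      using parseval[OF fin B(2) B(3)] u B(6) unfolding unit_in_def by metis
    then show ?thesis by simp
  qed
  also have "\<dots> = real CARD('i)" using u unfolding unit_in_def by simp
  finally show ?thesis .
qed

lemma frame_polar:
  fixes x :: "'i::finite \<Rightarrow> 'a::euclidean_space"
  assumes V: "subspace V"
    and fr: "\<forall>v\<in>V. (\<Sum>i\<in>UNIV. (v \<bullet> x i)^2) = C * (norm v)^2"
    and v: "v \<in> V" and w: "w \<in> V"
  shows "(\<Sum>i\<in>UNIV. (v \<bullet> x i) * (w \<bullet> x i)) = C * (v \<bullet> w)"
proof -
  have p: "v + w \<in> V" "v - w \<in> V" using V v w by (auto intro: subspace_add subspace_diff)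
  have "4 * (\<Sum>i\<in>UNIV. (v \<bullet> x i) * (w \<bullet> x i)) =
     (\<Sum>i\<in>UNIV. ((v + w) \<bullet> x i)^2) - (\<Sum>i\<in>UNIV. ((v - w) \<bullet> x i)^2)"
    by (simp add: sum_distrib_left sum_subtractf[symmetric] inner_add_left inner_diff_left power2_eq_square algebra_simps)
  also have "\<dots> = C * ((norm (v+w))^2 - (norm (v-w))^2)"
  proof -
    have "(\<Sum>i\<in>UNIV. ((v + w) \<bullet> x i)^2) = C * (norm (v+w))^2" using fr p(1) by blast
    moreover have "(\<Sum>i\<in>UNIV. ((v - w) \<bullet> x i)^2) = C * (norm (v-w))^2" using fr p(2) by blast
    ultimately show ?thesis by (simp add: algebra_simps)
  qed
  also have "\<dots> = 4 * (C * (v \<bullet> w))"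
    by (simp add: power2_norm_eq_inner inner_add_left inner_add_right inner_diff_left inner_diff_right inner_commute algebra_simps)
  finally show ?thesis by simp
qed

lemma frame_gram:
  fixes x :: "'i::finite \<Rightarrow> 'a::euclidean_space"
  assumes V: "subspace V" and u: "\<forall>i. x i \<in> V"
    and fr: "\<forall>v\<in>V. (\<Sum>i\<in>UNIV. (v \<bullet> x i)^2) = C * (norm v)^2"
  shows "(\<Sum>k\<in>UNIV. (x i \<bullet> x k) * (x k \<bullet> x j)) = C * (x i \<bullet> x j)"
  using frame_polar[OF V fr, of "x i" "x j"] u by (simp add: inner_commute)

lemma frame_design:
  fixes x :: "'i::finite \<Rightarrow> 'a::euclidean_space"
  assumes V: "subspace V" and tf: "tight_frame_on V x" and s: "(\<Sum>i\<in>UNIV. x i) = 0"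
  shows "spherical_2design_on V x"
proof -
  obtain C where C: "C > 0" "\<forall>v\<in>V. (\<Sum>i\<in>UNIV. (v \<bullet> x i)^2) = C * (norm v)^2"
    using tf unfolding tight_frame_on_def by blast
  have u: "unit_in V x" using tf unfolding tight_frame_on_def by blast
  have d: "C * real (dim V) = real CARD('i)" by (rule frame_dim[OF V u C(2)])
  have "real CARD('i) > 0" by simp
  hence "real (dim V) \<noteq> 0" using d by (metis mult_zero_right less_irrefl)
  hence dp: "real (dim V) > 0" using of_nat_0_le_iff[of "dim V"] by linarith
  have "(\<Sum>i\<in>UNIV. \<Sum>j\<in>UNIV. (x i \<bullet> x j)^2) = (\<Sum>i\<in>UNIV. C * (norm (x i))^2)"
    using C(2) u unfolding unit_in_def by (intro sum.cong) (auto simp: inner_commute)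
  also have "\<dots> = C * real CARD('i)" using u unfolding unit_in_def by simp
  also have "\<dots> = (real CARD('i))^2 / real (dim V)"
  proof -
    have nz: "real (dim V) \<noteq> 0" using dp by linarith
    have "C = real CARD('i) / real (dim V)" using d nz by (simp add: eq_divide_eq)
    then show ?thesis by (simp add: power2_eq_square)
  qed
  finally show ?thesis using u s unfolding spherical_2design_on_def by simp
qed


lemma gram_frame:
  fixes T :: "'i::finite \<Rightarrow> 'a::euclidean_space"
  assumes g: "\<forall>i j. (\<Sum>k\<in>UNIV. (T i \<bullet> T k) * (T k \<bullet> T j)) = c * (T i \<bullet> T j)"
  shows "\<forall>v\<in>span (range T). (\<Sum>k\<in>UNIV. (v \<bullet> T k)^2) = c * (norm v)^2"
proof
  fix v assume "v \<in> span (range T)"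
  then obtain u where v: "v = (\<Sum>w\<in>range T. u w *\<^sub>R w)"
    using span_finite[of "range T"] by auto
  have gw: "(\<Sum>k\<in>UNIV. (w \<bullet> T k) * (w' \<bullet> T k)) = c * (w \<bullet> w')"
    if "w \<in> range T" "w' \<in> range T" for w w'
    using that g by (auto simp: inner_commute)
  have vt: "v \<bullet> T k = (\<Sum>w\<in>range T. u w * (w \<bullet> T k))" for k
    by (simp add: v inner_sum_left)
  have "(\<Sum>k\<in>UNIV. (v \<bullet> T k)^2) =
      (\<Sum>k\<in>UNIV. \<Sum>w\<in>range T. \<Sum>w'\<in>range T. u w * u w' * ((w \<bullet> T k) * (w' \<bullet> T k)))"
    by (simp add: vt power2_eq_square sum_product algebra_simps)
  also have "\<dots> = (\<Sum>w\<in>range T. \<Sum>w'\<in>range T. u w * u w' * (\<Sum>k\<in>UNIV. (w \<bullet> T k) * (w' \<bullet> T k)))"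
    by (simp add: sum_distrib_left sum.swap[of _ UNIV])
  also have "\<dots> = (\<Sum>w\<in>range T. \<Sum>w'\<in>range T. u w * u w' * (c * (w \<bullet> w')))"
    by (intro sum.cong refl) (simp add: gw)
  also have "\<dots> = c * (v \<bullet> v)"
    apply (simp add: v inner_sum_left inner_sum_right sum_distrib_left algebra_simps)
    apply (subst sum.swap) apply (simp add: inner_commute mult.left_commute)
    done
  also have "\<dots> = c * (norm v)^2" by (simp add: power2_norm_eq_inner)
  finally show "(\<Sum>k\<in>UNIV. (v \<bullet> T k)^2) = c * (norm v)^2" .
qed

lemma lifting:
  fixes T :: "'i::finite \<Rightarrow> 'a::euclidean_space"
  assumes tf: "tight_frame_on (span (range T)) T" and s: "(\<Sum>i\<in>UNIV. T i) = 0" and td: "two_distance T"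
  shows "lifting_property T"
  unfolding lifting_property_def Let_def
proof (intro allI impI, elim conjE)
  fix u
  define V where "V = span (range T)"
  define m where "m = dim V"
  define t where "t = 1 / (real m + 1)"
  define \<sigma> where "\<sigma> = sqrt (1 - 1 / (real m + 1))"
  assume uo: "\<forall>w\<in>span (range T). u \<bullet> w = 0"
    and un: "norm u = 1 / sqrt (real (dim (span (range T))) + 1)"
  have uo': "\<forall>w\<in>V. u \<bullet> w = 0" using uo V_def by simp
  obtain C where C: "C > 0" "\<forall>v\<in>V. (\<Sum>i\<in>UNIV. (v \<bullet> T i)^2) = C * (norm v)^2"
    using tf unfolding tight_frame_on_def V_def by blast
  have uT: "unit_in V T" using tf unfolding tight_frame_on_def V_def by blast
  have subV: "subspace V" unfolding V_def by simp
  have d: "C * real m = real CARD('i)" unfolding m_def by (rule frame_dim[OF subV uT C(2)])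
  have mpos: "real m > 0"
  proof -
    have "real CARD('i) > 0" by simp
    hence "real m \<noteq> 0" using d by (metis mult_zero_right less_irrefl)
    thus ?thesis using of_nat_0_le_iff[of m] by linarith
  qed
  have tpos: "t > 0" unfolding t_def by simp
  have uu: "u \<bullet> u = t"
  proof -
    have "(norm u)^2 = t" using un unfolding t_def m_def V_def
      by (simp add: power_divide)
    thus ?thesis by (simp add: power2_norm_eq_inner)
  qed
  have ss: "\<sigma>^2 = 1 - t" unfolding \<sigma>_def t_def by (simp add: field_simps)
  have Tin: "T i \<in> V" for i using uT unfolding unit_in_def by blast
  have Tu: "T i \<bullet> u = 0" for i using uo' Tin inner_commute by metis
  have Tu': "u \<bullet> T i = 0" for i using Tu inner_commute by metis
  have TT: "T i \<bullet> T i = 1" for i using uT unfolding unit_in_def by (simp add: norm_eq_1)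
  define z where "z i = \<sigma> *\<^sub>R T i + u" for i
  have zz: "z i \<bullet> z j = \<sigma>^2 * (T i \<bullet> T j) + t" for i j
    by (simp add: z_def inner_add_left inner_add_right Tu Tu' uu power2_eq_square)
  have zn: "norm (z i) = 1" for i
  proof -
    have "z i \<bullet> z i = 1" using zz[of i i] TT ss by simp
    thus ?thesis by (simp add: norm_eq_1)
  qed
  let ?W = "span (insert u (span (range T)))"
  have WV: "?W = span (insert u V)" unfolding V_def ..
  have zW: "z i \<in> ?W" for i
    unfolding WV z_def
    by (intro span_add span_scale) (auto intro: span_base span_mono[THEN subsetD] simp: Tin)
  have CN: "(1 - t) * C = real CARD('i) * t"
  proof -
    have "1 - t = real m * t" unfolding t_def by (simp add: field_simps)
    hence "(1 - t) * C = t * (C * real m)" by (metis mult.commute mult.left_commute)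
    thus ?thesis using d by simp
  qed
  have fr: "(\<Sum>i\<in>UNIV. (w \<bullet> z i)^2) = (real CARD('i) * t) * (norm w)^2" if w: "w \<in> ?W" for w
  proof -
    obtain k where kv: "w - k *\<^sub>R u \<in> V" using w unfolding span_insert by (auto simp: V_def span_span)
    define v where "v = w - k *\<^sub>R u"
    have vV: "v \<in> V" using kv v_def by simp
    have wv: "w = v + k *\<^sub>R u" unfolding v_def by simp
    have vu: "v \<bullet> u = 0" using uo' vV inner_commute by metis
    have uv: "u \<bullet> v = 0" using uo' vV by blast
    have wz: "w \<bullet> z i = \<sigma> * (v \<bullet> T i) + k * t" for i
      by (simp add: wv z_def inner_add_left inner_add_right vu uv Tu Tu' uu)
    have sv: "(\<Sum>i\<in>UNIV. v \<bullet> T i) = 0" using s by (simp add: inner_sum_right[symmetric])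
    have "(\<Sum>i\<in>UNIV. (w \<bullet> z i)^2) = \<sigma>^2 * (\<Sum>i\<in>UNIV. (v \<bullet> T i)^2) + 2 * \<sigma> * k * t * (\<Sum>i\<in>UNIV. v \<bullet> T i)
        + real CARD('i) * (k * t)^2"
      by (simp add: wz power2_eq_square algebra_simps sum.distrib sum_distrib_left)
    also have "\<dots> = (1 - t) * C * (norm v)^2 + real CARD('i) * (k * t)^2"
      using C(2) vV sv ss by simp
    also have "\<dots> = (real CARD('i) * t) * ((norm v)^2 + k^2 * t)"
      unfolding CN by (simp add: algebra_simps power2_eq_square)
    also have "(norm v)^2 + k^2 * t = (norm w)^2"
      unfolding power2_norm_eq_inner wv by (simp add: inner_add_left inner_add_right vu uv uu algebra_simps power2_eq_square)
    finally show ?thesis .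
  qed
  show "two_distance_tight_frame_on ?W (\<lambda>i. sqrt (1 - 1 / (real (dim (span (range T))) + 1)) *\<^sub>R T i + u)"
  proof -
    have eqz: "(\<lambda>i. sqrt (1 - 1 / (real (dim (span (range T))) + 1)) *\<^sub>R T i + u) = z"
      unfolding z_def \<sigma>_def m_def V_def by simp
    have "tight_frame_on ?W z"
      unfolding tight_frame_on_def unit_in_def
      using zn zW fr tpos by (intro conjI exI[of _ "real CARD('i) * t"]) auto
    moreover have "two_distance z"
    proof -
      obtain a b where ab: "\<forall>i j. i \<noteq> j \<longrightarrow> T i \<bullet> T j = a \<or> T i \<bullet> T j = b"
        using td unfolding two_distance_def by blast
      show ?thesis unfolding two_distance_def
        using zn ab zz by (intro conjI exI[of _ "\<sigma>^2 * a + t"] exI[of _ "\<sigma>^2 * b + t"]) auto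
    qed
    ultimately show ?thesis unfolding eqz two_distance_tight_frame_on_def by simp
  qed
qed


locale srgc =
  fixes G :: "'v::finite \<Rightarrow> 'v \<Rightarrow> bool" and k la mu :: nat
  assumes sym: "G u w \<longleftrightarrow> G w u" and irr: "\<not> G u u"
    and deg: "card {w. G u w} = k"
    and lam: "u \<noteq> w \<Longrightarrow> G u w \<Longrightarrow> card {z. G u z \<and> G w z} = la"
    and muu: "u \<noteq> w \<Longrightarrow> \<not> G u w \<Longrightarrow> card {z. G u z \<and> G w z} = mu"
    and ncomp: "\<not> complete_graph G" and nemp: "\<not> empty_graph G"
begin

definition \<alpha> :: "'v \<Rightarrow> 'v \<Rightarrow> real" where "\<alpha> i j = of_bool (G i j)"
definition NN :: real where "NN = real CARD('v)"

lemma alpha_sym: "\<alpha> i j = \<alpha> j i" unfolding \<alpha>_def using sym by simp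

lemma deg_sum: "(\<Sum>j\<in>UNIV. \<alpha> i j) = real k"
  unfolding \<alpha>_def using deg[of i] by simp

lemma deg_sum': "(\<Sum>j\<in>UNIV. \<alpha> j i) = real k"
proof -
  have "(\<Sum>j\<in>UNIV. \<alpha> j i) = (\<Sum>j\<in>UNIV. \<alpha> i j)" by (rule sum.cong) (auto intro: alpha_sym)
  thus ?thesis using deg_sum by simp
qed

lemma sq_sum: "(\<Sum>j\<in>UNIV. \<alpha> i j * \<alpha> j l) =
   real mu + (real la - real mu) * \<alpha> i l + (real k - real mu) * of_bool (i = l)"
proof -
  have "(\<Sum>j\<in>UNIV. \<alpha> i j * \<alpha> j l) = real (card {z. G i z \<and> G l z})"
    unfolding \<alpha>_def using sym by (simp add: of_bool_conj[symmetric] Int_def)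
  also have "\<dots> = real mu + (real la - real mu) * \<alpha> i l + (real k - real mu) * of_bool (i = l)"
  proof (cases "i = l")
    case True thus ?thesis using deg[of i] irr unfolding \<alpha>_def by simp
  next
    case False thus ?thesis using lam[of i l] muu[of i l] unfolding \<alpha>_def by auto
  qed
  finally show ?thesis .
qed

lemma NN_pos: "NN > 0" unfolding NN_def by simp

lemma ident: "real k ^ 2 = (real k - real mu) + (real la - real mu) * real k + real mu * NN"
proof -
  fix i :: 'v
  have "(\<Sum>l\<in>UNIV. \<Sum>j\<in>UNIV. \<alpha> i j * \<alpha> j l) = (\<Sum>j\<in>UNIV. \<alpha> i j * (\<Sum>l\<in>UNIV. \<alpha> j l))"
    by (subst sum.swap) (simp add: sum_distrib_left)
  also have "\<dots> = real k ^ 2" by (simp add: deg_sum sum_distrib_right[symmetric] power2_eq_square)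
  finally have 1: "(\<Sum>l\<in>UNIV. \<Sum>j\<in>UNIV. \<alpha> i j * \<alpha> j l) = real k ^ 2" .
  have "(\<Sum>l\<in>UNIV. \<Sum>j\<in>UNIV. \<alpha> i j * \<alpha> j l) =
     (\<Sum>l\<in>UNIV. real mu + (real la - real mu) * \<alpha> i l + (real k - real mu) * of_bool (i = l))"
    by (simp add: sq_sum)
  also have "\<dots> = real mu * NN + (real la - real mu) * real k + (real k - real mu)"
    by (simp add: sum.distrib sum_distrib_left[symmetric] deg_sum NN_def)
  finally show ?thesis using 1 by simp
qed

lemma adj_pair: obtains p q where "G p q" "p \<noteq> q"
  using nemp irr unfolding empty_graph_def by blast

lemma nadj_pair: obtains p q where "\<not> G p q" "p \<noteq> q"
  using ncomp unfolding complete_graph_def by blast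

lemma la_lt: "real la + 1 \<le> real k"
proof -
  obtain p q where pq: "G p q" "p \<noteq> q" by (rule adj_pair)
  have "{z. G p z \<and> G q z} \<subseteq> {z. G p z} - {q}" using irr by auto
  hence "card {z. G p z \<and> G q z} \<le> card ({z. G p z} - {q})" by (intro card_mono) auto
  also have "\<dots> = k - 1" using deg[of p] pq by simp
  finally have "la \<le> k - 1" using lam[OF pq(2) pq(1)] by simp
  moreover have "k \<ge> 1" using deg[of p] pq
    by (metis One_nat_def Suc_leI card_gt_0_iff empty_iff finite mem_Collect_eq)
  ultimately show ?thesis by linarith
qed

lemma mu_le: "real mu \<le> real k"
proof -
  obtain p q where pq: "\<not> G p q" "p \<noteq> q" by (rule nadj_pair)
  have "card {z. G p z \<and> G q z} \<le> card {z. G p z}" by (intro card_mono) auto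
  thus ?thesis using muu[OF pq(2) pq(1)] deg[of p] by simp
qed

definition DD :: real where "DD = (real la - real mu)^2 + 4 * (real k - real mu)"
definition r1 :: real where "r1 = (real la - real mu + sqrt DD) / 2"
definition r2 :: real where "r2 = (real la - real mu - sqrt DD) / 2"

lemma DD_pos: "DD > 0"
proof (cases "real k = real mu")
  case True
  hence "real la \<noteq> real mu" using la_lt by linarith
  thus ?thesis unfolding DD_def using True by simp
next
  case False
  hence "real k - real mu > 0" using mu_le by linarith
  thus ?thesis unfolding DD_def by (simp add: add_nonneg_pos)
qed

lemma r12: "r1 > r2" "r1 + r2 = real la - real mu" "r1 * r2 = real mu - real k"
proof -
  show "r1 > r2" unfolding r1_def r2_def using DD_pos by simp
  show "r1 + r2 = real la - real mu" unfolding r1_def r2_def by (simp add: field_simps)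
  have "sqrt DD * sqrt DD = DD" using DD_pos by simp
  thus "r1 * r2 = real mu - real k" unfolding r1_def r2_def DD_def
    by (simp add: field_simps power2_eq_square)
qed

end


context srgc begin

definition Av :: "real^'v \<Rightarrow> real^'v" where "Av v = adj_matrix G *v v"
definition sv :: "real^'v \<Rightarrow> real" where "sv v = (\<Sum>j\<in>UNIV. v $ j)"

lemma Av_nth: "Av v $ i = (\<Sum>j\<in>UNIV. \<alpha> i j * v $ j)"
  unfolding Av_def adj_matrix_def matrix_vector_mult_def \<alpha>_def by (simp add: of_bool_def)

lemma inner_one: "v \<bullet> vec 1 = sv v"
  unfolding sv_def inner_vec_def by simp

lemma A2: "(\<Sum>j\<in>UNIV. \<alpha> i j * Av v $ j) =
   real mu * sv v + (real la - real mu) * Av v $ i + (real k - real mu) * v $ i"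
proof -
  have "(\<Sum>j\<in>UNIV. \<alpha> i j * Av v $ j) = (\<Sum>l\<in>UNIV. (\<Sum>j\<in>UNIV. \<alpha> i j * \<alpha> j l) * v $ l)"
    by (simp add: Av_nth sum_distrib_left sum_distrib_right mult.assoc) (rule sum.swap)
  also have "\<dots> = (\<Sum>l\<in>UNIV. real mu * v $ l + (real la - real mu) * (\<alpha> i l * v $ l)
       + (real k - real mu) * (of_bool (i = l) * v $ l))"
    by (intro sum.cong refl) (simp only: sq_sum, simp add: algebra_simps)
  also have "\<dots> = real mu * sv v + (real la - real mu) * Av v $ i + (real k - real mu) * v $ i"
    by (simp add: sum.distrib sum_distrib_left[symmetric] sv_def Av_nth)
  finally show ?thesis .
qed

lemma Av_add: "Av (v + w) = Av v + Av w" unfolding Av_def by (simp add: matrix_vector_right_distrib)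
lemma Av_scale: "Av (c *\<^sub>R v) = c *\<^sub>R Av v" unfolding Av_def by (simp add: matrix_vector_mult_scaleR)
lemma Av_zero: "Av 0 = 0" unfolding Av_def by simp
lemma Av_sym: "Av v \<bullet> w = v \<bullet> Av w"
proof -
  have "Av v \<bullet> w = (\<Sum>i\<in>UNIV. \<Sum>j\<in>UNIV. \<alpha> i j * v $ j * w $ i)"
    by (simp add: inner_vec_def Av_nth sum_distrib_right)
  also have "\<dots> = (\<Sum>j\<in>UNIV. \<Sum>i\<in>UNIV. \<alpha> j i * w $ i * v $ j)"
    by (subst sum.swap) (simp add: alpha_sym mult.commute mult.left_commute)
  also have "\<dots> = v \<bullet> Av w"
    by (simp add: inner_vec_def Av_nth sum_distrib_right sum_distrib_left mult.commute mult.left_commute)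
  finally show ?thesis .
qed

lemma sv_Av: "sv (Av v) = real k * sv v"
proof -
  have "sv (Av v) = (\<Sum>j\<in>UNIV. (\<Sum>i\<in>UNIV. \<alpha> i j) * v $ j)"
    by (simp add: sv_def Av_nth sum_distrib_right) (rule sum.swap)
  also have "\<dots> = real k * sv v" by (simp add: deg_sum' sv_def sum_distrib_left)
  finally show ?thesis .
qed

end

locale srgp = srgc G k la mu for G :: "'v::finite \<Rightarrow> 'v \<Rightarrow> bool" and k la mu +
  fixes r r' :: real
  assumes rne: "r \<noteq> r'" and rsum: "r + r' = real la - real mu" and rprod: "r * r' = real mu - real k"
begin

definition P :: "real^'v \<Rightarrow> real^'v" where
  "P v = (\<chi> i. (Av v $ i - r' * v $ i - (real k - r') / NN * sv v) / (r - r'))"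

definition E :: "(real^'v) set" where "E = {v. v \<bullet> vec 1 = 0 \<and> Av v = r *\<^sub>R v}"

lemma P_nth: "P v $ i = (Av v $ i - r' * v $ i - (real k - r') / NN * sv v) / (r - r')"
  unfolding P_def by simp

lemma rr: "r - r' \<noteq> 0" using rne by simp

lemma sv_P: "sv (P v) = 0"
proof -
  have "sv (P v) = (\<Sum>i\<in>UNIV. Av v $ i - r' * v $ i - (real k - r') / NN * sv v) / (r - r')"
    by (simp add: sv_def P_nth sum_divide_distrib)
  also have "(\<Sum>i\<in>UNIV. Av v $ i - r' * v $ i - (real k - r') / NN * sv v) =
      sv (Av v) - r' * sv v - NN * ((real k - r') / NN * sv v)"
    by (simp add: sum_subtractf sv_def sum_distrib_left NN_def)
  also have "\<dots> = 0" using NN_pos by (simp add: sv_Av field_simps)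
  finally show ?thesis by simp
qed

lemma P_eig: "Av (P v) = r *\<^sub>R P v"
proof -
  have key: "real mu - (real k - r') * real k / NN = - r * (real k - r') / NN"
  proof -
    have e: "(r + r') * real k = (real la - real mu) * real k" using rsum by simp
    have "(real k - r') * real k - r * (real k - r') = real k * real k - (r + r') * real k + r * r'"
      by (simp add: algebra_simps)
    also have "\<dots> = real k * real k - (real la - real mu) * real k + (real mu - real k)"
      using e rprod by simp
    also have "\<dots> = real mu * NN" using ident unfolding power2_eq_square by simp
    finally have "real mu * NN = (real k - r') * real k - r * (real k - r')" by simp
    thus ?thesis using NN_pos by (simp add: field_simps)
  qed
  show ?thesis
  proof (subst vec_eq_iff, intro allI)
    fix i
    have "Av (P v) $ i = (\<Sum>j\<in>UNIV. \<alpha> i j * ((Av v $ j - r' * v $ j - (real k - r') / NN * sv v) / (r - r')))"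
      by (simp add: Av_nth P_nth)
    also have "\<dots> = (\<Sum>j\<in>UNIV. \<alpha> i j * Av v $ j - r' * (\<alpha> i j * v $ j) - (real k - r') / NN * sv v * \<alpha> i j) / (r - r')"
      unfolding sum_divide_distrib by (intro sum.cong refl) (simp add: diff_divide_distrib algebra_simps)
    also have "\<dots> = ((\<Sum>j\<in>UNIV. \<alpha> i j * Av v $ j) - r' * Av v $ i - (real k - r') / NN * sv v * real k) / (r - r')"
      by (simp add: sum_subtractf sum_distrib_left[symmetric] sum_divide_distrib[symmetric] Av_nth deg_sum)
    also have "\<dots> = (real mu * sv v + (real la - real mu - r') * Av v $ i + (real k - real mu) * v $ i
          - (real k - r') * real k / NN * sv v) / (r - r')"
      by (subst A2, rule arg_cong[where f="\<lambda>t. t / (r - r')"], simp add: algebra_simps)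
    also have "\<dots> = ((real mu - (real k - r') * real k / NN) * sv v + r * Av v $ i - r * r' * v $ i) / (r - r')"
    proof -
      have e0: "real la - real mu - r' = r" using rsum by simp
      have e1: "(real la - real mu - r') * Av v $ i = r * Av v $ i" unfolding e0 ..
      have e2: "(real k - real mu) * v $ i = - (r * r') * v $ i" using rprod by simp
      show ?thesis unfolding e1 e2 by (simp add: algebra_simps)
    qed
    also have "\<dots> = r * P v $ i"
      unfolding key P_nth using NN_pos rne by (simp add: field_simps)
    finally show "Av (P v) $ i = (r *\<^sub>R P v) $ i" by simp
  qed
qed

lemma P_in: "P v \<in> E"
  unfolding E_def using P_eig sv_P inner_one by simp

lemma P_fix: assumes "v \<in> E" shows "P v = v"
proof -
  have s: "sv v = 0" and a: "Av v = r *\<^sub>R v" using assms inner_one unfolding E_def by auto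
  show ?thesis
    by (simp add: vec_eq_iff P_nth s a field_simps rne)
qed

lemma P_inner: "P v \<bullet> w = (Av v \<bullet> w - r' * (v \<bullet> w) - (real k - r') / NN * sv v * sv w) / (r - r')"
proof -
  have "P v \<bullet> w = (\<Sum>i\<in>UNIV. (Av v $ i * w $ i - r' * (v $ i * w $ i) - (real k - r') / NN * sv v * w $ i)) / (r - r')"
    unfolding inner_vec_def P_nth sum_divide_distrib
    by (intro sum.cong refl) (simp add: diff_divide_distrib algebra_simps)
  also have "(\<Sum>i\<in>UNIV. (Av v $ i * w $ i - r' * (v $ i * w $ i) - (real k - r') / NN * sv v * w $ i))
     = Av v \<bullet> w - r' * (v \<bullet> w) - (real k - r') / NN * sv v * sv w"
    by (simp add: sum_subtractf inner_vec_def sum_distrib_left sv_def)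
  finally show ?thesis .
qed

lemma P_sym: "P v \<bullet> w = v \<bullet> P w"
proof -
  have "P v \<bullet> w = w \<bullet> P v" by (simp add: inner_commute)
  have a: "w \<bullet> Av v = v \<bullet> Av w" using Av_sym inner_commute by metis
  have "v \<bullet> P w = P w \<bullet> v" by (simp add: inner_commute)
  also have "\<dots> = (Av w \<bullet> v - r' * (w \<bullet> v) - (real k - r') / NN * sv w * sv v) / (r - r')" by (rule P_inner)
  also have "\<dots> = P v \<bullet> w" unfolding P_inner using a by (simp add: inner_commute mult.commute mult.left_commute)
  finally show ?thesis by simp
qed

lemma E_sub: "subspace E"
  unfolding subspace_def E_def
  by (auto simp: inner_add_left Av_add Av_scale scaleR_add_right Av_zero)

lemma cp: "closest_point E x = P x"
proof -
  have "P x = closest_point E x"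
  proof (rule closest_point_unique)
    show "convex E" by (rule subspace_imp_convex[OF E_sub])
    show "closed E" by (rule closed_subspace[OF E_sub])
    show "P x \<in> E" by (rule P_in)
    show "\<forall>z\<in>E. dist x (P x) \<le> dist x z"
    proof
      fix z assume z: "z \<in> E"
      have o: "(x - P x) \<bullet> (P x - z) = 0"
      proof -
        have "P x - z \<in> E" using E_sub P_in z by (simp add: subspace_diff)
        hence "P (P x - z) = P x - z" by (rule P_fix)
        hence "x \<bullet> (P x - z) = P x \<bullet> (P x - z)" using P_sym[of x "P x - z"] by simp
        thus ?thesis by (simp add: inner_diff_left)
      qed
      have "(dist x z)^2 = (dist x (P x))^2 + (norm (P x - z))^2"
      proof -
        have "x - z = (x - P x) + (P x - z)" by simp
        hence "(norm (x - z))^2 = (norm (x - P x))^2 + (norm (P x - z))^2"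
          using o by (metis norm_add_Pythagorean orthogonal_def)
        thus ?thesis by (simp add: dist_norm)
      qed
      hence "(dist x (P x))^2 \<le> (dist x z)^2" by simp
      thus "dist x (P x) \<le> dist x z" by (simp add: power2_le_iff_abs_le)
    qed
  qed
  thus ?thesis by simp
qed

definition h :: "'v \<Rightarrow> 'v \<Rightarrow> real" where
  "h i j = (\<alpha> i j - r' * of_bool (i = j) - (real k - r') / NN) / (r - r')"

lemma h_sym: "h i j = h j i" unfolding h_def by (simp add: alpha_sym eq_commute)

lemma P_axis: "P (axis i 1) $ j = h j i"
proof -
  have "Av (axis i 1) $ j = (\<Sum>ja\<in>UNIV. if ja = i then \<alpha> j i else 0)"
    unfolding Av_nth by (intro sum.cong) (auto simp: axis_def)
  hence "Av (axis i 1) $ j = \<alpha> j i" by simp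
  moreover have "sv (axis i 1) = 1" by (simp add: sv_def axis_def)
  ultimately show ?thesis unfolding P_nth h_def by (simp add: axis_def of_bool_def)
qed

lemma P_ip: "P (axis i 1) \<bullet> P (axis j 1) = h i j"
proof -
  have "P (axis i 1) \<bullet> P (axis j 1) = axis i 1 \<bullet> P (P (axis j 1))" by (rule P_sym)
  also have "\<dots> = axis i 1 \<bullet> P (axis j 1)" using P_fix[OF P_in] by simp
  also have "\<dots> = h i j" by (simp add: inner_axis' P_axis)
  finally show ?thesis .
qed

definition dd :: real where "dd = (- r' - (real k - r') / NN) / (r - r')"

lemma h_diag: "h i i = dd" unfolding h_def dd_def \<alpha>_def using irr by simp

lemma dd_pos: "dd > 0"
proof -
  have "dd \<ge> 0" by (metis P_ip h_diag inner_ge_zero)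
  moreover have "dd \<noteq> 0"
  proof
    assume d0: "dd = 0"
    have z: "h i j = 0" for i j
    proof -
      have "P (axis i 1) \<bullet> P (axis i 1) = 0" using P_ip h_diag d0 by simp
      hence "P (axis i 1) = 0" by simp
      thus ?thesis using P_ip[of i j] by simp
    qed
    obtain p q where pq: "G p q" "p \<noteq> q" by (rule adj_pair)
    obtain p' q' where pq': "\<not> G p' q'" "p' \<noteq> q'" by (rule nadj_pair)
    have "(1 - (real k - r') / NN) / (r - r') = 0" using z[of p q] pq unfolding h_def \<alpha>_def by simp
    moreover have "(0 - (real k - r') / NN) / (r - r') = 0" using z[of p' q'] pq' unfolding h_def \<alpha>_def by simp
    ultimately show False using rr by simp
  qed
  ultimately show ?thesis by simp
qed

end


lemma expand9:
  fixes al :: "'v::finite \<Rightarrow> 'v \<Rightarrow> real"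
  assumes sy: "\<And>i j. al i j = al j i"
  shows "(\<Sum>l\<in>UNIV. (b + be * al i l + ga * of_bool (i = l)) * (b + be * al l j + ga * of_bool (l = j))) =
    b^2 * real CARD('v) + b * be * (\<Sum>l\<in>UNIV. al i l) + b * be * (\<Sum>l\<in>UNIV. al j l) + 2 * b * ga
    + be^2 * (\<Sum>l\<in>UNIV. al i l * al l j) + 2 * be * ga * al i j + ga^2 * of_bool (i = j)"
proof -
  have "(\<Sum>l\<in>UNIV. (b + be * al i l + ga * of_bool (i = l)) * (b + be * al l j + ga * of_bool (l = j))) =
    (\<Sum>l\<in>UNIV. b^2 + b * be * al i l + b * be * al j l + be^2 * (al i l * al l j)
      + b * ga * of_bool (l = j) + b * ga * of_bool (i = l)
      + be * ga * (al i l * of_bool (l = j)) + be * ga * (of_bool (i = l) * al l j)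
      + ga^2 * (of_bool (i = l) * of_bool (l = j)))"
    by (intro sum.cong refl) (simp add: sy[of _ j] algebra_simps power2_eq_square)
  also have "\<dots> = b^2 * real CARD('v) + b * be * (\<Sum>l\<in>UNIV. al i l) + b * be * (\<Sum>l\<in>UNIV. al j l)
      + be^2 * (\<Sum>l\<in>UNIV. al i l * al l j) + b * ga + b * ga + be * ga * al i j + be * ga * al i j
      + ga^2 * of_bool (i = j)"
    by (simp add: sum.distrib sum_distrib_left[symmetric] of_bool_def if_distrib[where f="\<lambda>x. _ * x"]
        if_distrib[where f="\<lambda>x. x * _"] cong: if_cong)
  also have "\<dots> = b^2 * real CARD('v) + b * be * (\<Sum>l\<in>UNIV. al i l) + b * be * (\<Sum>l\<in>UNIV. al j l) + 2 * b * ga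
    + be^2 * (\<Sum>l\<in>UNIV. al i l * al l j) + 2 * be * ga * al i j + ga^2 * of_bool (i = j)"
    by simp
  finally show ?thesis .
qed


context srgc begin

sublocale p1: srgp G k la mu r1 r2
  by unfold_locales (use r12 in auto)

sublocale p2: srgp G k la mu r2 r1
  by unfold_locales (use r12 in \<open>auto simp: algebra_simps\<close>)

lemma eig_root:
  assumes v: "v \<noteq> 0" "sv v = 0" "Av v = c *\<^sub>R v"
  shows "c = r1 \<or> c = r2"
proof -
  obtain i where vi: "v $ i \<noteq> 0" using v(1) by (metis vec_eq_iff zero_index)
  have avj: "\<And>j. Av v $ j = c * v $ j" using v(3) by simp
  have "(\<Sum>j\<in>UNIV. \<alpha> i j * Av v $ j) = c * (\<Sum>j\<in>UNIV. \<alpha> i j * v $ j)"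
    by (simp add: avj sum_distrib_left algebra_simps)
  also have "\<dots> = c * Av v $ i" by (simp add: Av_nth)
  finally have "(\<Sum>j\<in>UNIV. \<alpha> i j * Av v $ j) = c * Av v $ i" .
  hence "c * (c * v $ i) = (real la - real mu) * (c * v $ i) + (real k - real mu) * v $ i"
    using A2[of i v] v by simp
  hence "(c * c - (real la - real mu) * c - (real k - real mu)) * v $ i = 0"
    by (simp add: algebra_simps)
  hence "c * c - (real la - real mu) * c - (real k - real mu) = 0" using vi by simp
  moreover have e: "c * r1 + c * r2 = c * real la - c * real mu" using r12(2) by (metis distrib_left right_diff_distrib)
  ultimately have "c * c - (c * r1 + c * r2) + r1 * r2 = 0" using r12(3) by (simp add: algebra_simps)
  hence "(c - r1) * (c - r2) = 0" by (simp add: algebra_simps)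
  thus ?thesis by simp
qed

lemma P_nz: "p1.P (axis i 1) \<noteq> 0" "p2.P (axis i 1) \<noteq> 0"
proof -
  show "p1.P (axis i 1) \<noteq> 0"
  proof
    assume "p1.P (axis i 1) = 0"
    hence "p1.h i i = 0" using p1.P_ip[of i i] by simp
    thus False using p1.h_diag p1.dd_pos by simp
  qed
  show "p2.P (axis i 1) \<noteq> 0"
  proof
    assume "p2.P (axis i 1) = 0"
    hence "p2.h i i = 0" using p2.P_ip[of i i] by simp
    thus False using p2.h_diag p2.dd_pos by simp
  qed
qed

lemma eigs: "eigs_perp G = {r1, r2}"
proof
  show "eigs_perp G \<subseteq> {r1, r2}"
  proof
    fix x assume "x \<in> eigs_perp G"
    then obtain v :: "real^'v" where v: "v \<noteq> 0" "v \<bullet> vec 1 = 0" "Av v = x *\<^sub>R v"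
      unfolding eigs_perp_def Av_def by blast
    show "x \<in> {r1, r2}" using eig_root[OF v(1) _ v(3)] v(2) inner_one by simp
  qed
  fix i :: 'v
  have "r1 \<in> eigs_perp G"
    unfolding eigs_perp_def using P_nz(1)[of i] p1.P_in[of "axis i 1"]
    unfolding p1.E_def Av_def by blast
  moreover have "r2 \<in> eigs_perp G"
    unfolding eigs_perp_def using P_nz(2)[of i] p2.P_in[of "axis i 1"]
    unfolding p2.E_def Av_def by blast
  ultimately show "{r1, r2} \<subseteq> eigs_perp G" by simp
qed

lemma eigval: "srg_eigval G 1 = r1" "srg_eigval G 2 = r2"
  unfolding srg_eigval_def eigs using r12(1) by auto

lemma eigspace: "srg_eigspace G 1 = p1.E" "srg_eigspace G 2 = p2.E"
  unfolding srg_eigspace_def p1.E_def p2.E_def eigval Av_def by auto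

lemma dgs: "dgs_embedding G 1 i = (1 / sqrt p1.dd) *\<^sub>R p1.P (axis i 1)"
           "dgs_embedding G 2 i = (1 / sqrt p2.dd) *\<^sub>R p2.P (axis i 1)"
proof -
  have n1: "norm (p1.P (axis i 1)) = sqrt p1.dd"
    unfolding norm_eq_sqrt_inner p1.P_ip p1.h_diag ..
  have n2: "norm (p2.P (axis i 1)) = sqrt p2.dd"
    unfolding norm_eq_sqrt_inner p2.P_ip p2.h_diag ..
  show "dgs_embedding G 1 i = (1 / sqrt p1.dd) *\<^sub>R p1.P (axis i 1)"
    unfolding dgs_embedding_def Let_def eigspace p1.cp n1 by (simp add: divide_inverse_commute)
  show "dgs_embedding G 2 i = (1 / sqrt p2.dd) *\<^sub>R p2.P (axis i 1)"
    unfolding dgs_embedding_def Let_def eigspace p2.cp n2 by (simp add: divide_inverse_commute)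
qed

end

context srgp begin

definition TT :: "'v \<Rightarrow> real^'v" where "TT i = (1 / sqrt dd) *\<^sub>R P (axis i 1)"

lemma TT_ip: "TT i \<bullet> TT j = h i j / dd"
  unfolding TT_def using dd_pos by (simp add: P_ip real_sqrt_mult[symmetric])

lemma TT_E: "TT i \<in> E" unfolding TT_def using E_sub P_in by (simp add: subspace_scale)

lemma TT_sum: "(\<Sum>i\<in>UNIV. TT i) = 0"
proof -
  have "(\<Sum>i\<in>UNIV. P (axis i 1)) = 0"
  proof (subst vec_eq_iff, intro allI)
    fix l
    have "(\<Sum>i\<in>UNIV. P (axis i 1)) $ l = (\<Sum>i\<in>UNIV. h l i)" by (simp add: sum_component P_axis)
    also have "\<dots> = (\<Sum>i\<in>UNIV. \<alpha> l i - r' * of_bool (l = i) - (real k - r') / NN) / (r - r')"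
      unfolding h_def sum_divide_distrib ..
    also have "(\<Sum>i\<in>UNIV. \<alpha> l i - r' * of_bool (l = i) - (real k - r') / NN) = real k - r' - NN * ((real k - r') / NN)"
      by (simp add: sum_subtractf deg_sum NN_def)
    also have "\<dots> = 0" using NN_pos by simp
    finally show "(\<Sum>i\<in>UNIV. P (axis i 1)) $ l = 0 $ l" by simp
  qed
  thus ?thesis unfolding TT_def by (simp add: scaleR_sum_right[symmetric])
qed

lemma TT_frame: "v \<in> E \<Longrightarrow> (\<Sum>i\<in>UNIV. (v \<bullet> TT i)^2) = (1 / dd) * (norm v)^2"
proof -
  assume v: "v \<in> E"
  have "v \<bullet> TT i = v $ i / sqrt dd" for i
  proof -
    have "v \<bullet> P (axis i 1) = P v \<bullet> axis i 1" using P_sym[of v "axis i 1"] by simp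
    also have "\<dots> = v $ i" using P_fix[OF v] by (simp add: inner_axis)
    finally show ?thesis unfolding TT_def by simp
  qed
  hence "(\<Sum>i\<in>UNIV. (v \<bullet> TT i)^2) = (\<Sum>i\<in>UNIV. (v $ i)^2) / dd"
    using dd_pos by (simp add: power_divide sum_divide_distrib)
  also have "(\<Sum>i\<in>UNIV. (v $ i)^2) = (norm v)^2"
    unfolding power2_norm_eq_inner inner_vec_def by (simp add: power2_eq_square)
  finally show ?thesis by simp
qed

lemma TT_props:
  "spherical_2design_on (span (range TT)) TT \<and> two_distance_tight_frame_on (span (range TT)) TT
   \<and> lifting_property TT"
proof -
  have VE: "span (range TT) \<subseteq> E" by (rule span_minimal) (auto simp: TT_E E_sub)
  have un: "norm (TT i) = 1" for i
    using TT_ip[of i i] h_diag dd_pos by (simp add: norm_eq_1)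
  have tf: "tight_frame_on (span (range TT)) TT"
    unfolding tight_frame_on_def unit_in_def
    using un VE TT_frame dd_pos by (intro conjI exI[of _ "1 / dd"]) (auto intro: span_base)
  have td: "two_distance TT"
  proof -
    have "\<forall>i j. i \<noteq> j \<longrightarrow> TT i \<bullet> TT j = ((1 - (real k - r') / NN) / (r - r')) / dd
        \<or> TT i \<bullet> TT j = ((0 - (real k - r') / NN) / (r - r')) / dd"
      by (auto simp: TT_ip h_def \<alpha>_def)
    thus ?thesis unfolding two_distance_def using un by blast
  qed
  show ?thesis
    using frame_design[OF subspace_span tf TT_sum] tf td lifting[OF tf TT_sum td]
    unfolding two_distance_tight_frame_on_def by blast
qed

end


context srgp begin

lemma gram_match:
  fixes z :: "'v \<Rightarrow> 'a::real_inner"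
  assumes g: "\<And>i j. z i \<bullet> z j = b + be * \<alpha> i j + ga * of_bool (i = j)"
    and gz1: "\<And>i. z i \<bullet> z i = 1"
    and c1: "ga + be * r' = 0" and c2: "b * NN + be * real k + ga = 0"
  shows "z i \<bullet> z j = TT i \<bullet> TT j"
proof -
  have nn: "NN \<noteq> 0" using NN_pos by simp
  have bN: "b * NN = - (be * (real k - r'))" using c1 c2 by algebra
  have hb: "b = - (be * (real k - r')) / NN" using bN nn by (simp add: field_simps)
  have gh: "z i \<bullet> z j = be * (r - r') * h i j" for i j
  proof -
    have "be * (r - r') * h i j = be * (\<alpha> i j - r' * of_bool (i = j) - (real k - r') / NN)"
      unfolding h_def using rr by simp
    also have "\<dots> = b + be * \<alpha> i j + ga * of_bool (i = j)"
      using hb c1 by (simp add: algebra_simps diff_divide_distrib)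
    finally show ?thesis using g by simp
  qed
  have diag: "be * (r - r') * dd = 1" using gh[of i i] gz1[of i] h_diag[of i] by simp
  have inv: "be * (r - r') = 1 / dd" using diag dd_pos by (simp add: eq_divide_eq)
  have "TT i \<bullet> TT j = h i j / dd" by (rule TT_ip)
  also have "\<dots> = be * (r - r') * h i j" unfolding inv by simp
  finally show ?thesis using gh by simp
qed

end

context srgc begin

lemma design_gram:
  fixes z :: "'v \<Rightarrow> 'a::real_inner" and a b c :: real
  assumes gz: "\<And>i j. z i \<bullet> z j = (if i = j then 1 else if G i j then a else b)"
    and ab: "a \<noteq> b"
    and sq: "\<And>i j. (\<Sum>l\<in>UNIV. (z i \<bullet> z l) * (z l \<bullet> z j)) = c * (z i \<bullet> z j)"
    and s0: "\<And>i. (\<Sum>j\<in>UNIV. z i \<bullet> z j) = 0"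
  shows "same_gram z (dgs_embedding G 1) \<or> same_gram z (dgs_embedding G 2)"
proof -
  define be where "be = a - b"
  define ga where "ga = 1 - b"
  have bne: "be \<noteq> 0" using ab be_def by simp
  have g: "z i \<bullet> z j = b + be * \<alpha> i j + ga * of_bool (i = j)" for i j
    using gz[of i j] irr[of i] unfolding \<alpha>_def be_def ga_def by auto
  have gz1: "z i \<bullet> z i = 1" for i using gz by simp
  have ex: "c * (b + be * \<alpha> i j + ga * of_bool (i = j)) =
      b^2 * NN + 2 * b * be * real k + 2 * b * ga
      + be^2 * (real mu + (real la - real mu) * \<alpha> i j + (real k - real mu) * of_bool (i = j))
      + 2 * be * ga * \<alpha> i j + ga^2 * of_bool (i = j)" for i j
  proof -
    have "c * (b + be * \<alpha> i j + ga * of_bool (i = j)) = (\<Sum>l\<in>UNIV. (z i \<bullet> z l) * (z l \<bullet> z j))"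
      using sq g by simp
    also have "\<dots> = (\<Sum>l\<in>UNIV. (b + be * \<alpha> i l + ga * of_bool (i = l)) * (b + be * \<alpha> l j + ga * of_bool (l = j)))"
      by (simp only: g)
    also have "\<dots> = b^2 * NN + 2 * b * be * real k + 2 * b * ga
      + be^2 * (real mu + (real la - real mu) * \<alpha> i j + (real k - real mu) * of_bool (i = j))
      + 2 * be * ga * \<alpha> i j + ga^2 * of_bool (i = j)"
      unfolding expand9[of \<alpha>, OF alpha_sym] deg_sum sq_sum NN_def by simp
    finally show ?thesis .
  qed
  obtain p q where pq: "G p q" "p \<noteq> q" by (rule adj_pair)
  obtain p' q' where pq': "\<not> G p' q'" "p' \<noteq> q'" by (rule nadj_pair)
  have D: "c * (b + ga) = b^2 * NN + 2 * b * be * real k + 2 * b * ga + be^2 * real k + ga^2"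
    using ex[of p p] irr[of p] unfolding \<alpha>_def by (simp add: algebra_simps)
  have A: "c * (b + be) = b^2 * NN + 2 * b * be * real k + 2 * b * ga + be^2 * real la + 2 * be * ga"
    using ex[of p q] pq unfolding \<alpha>_def by (simp add: algebra_simps)
  have N: "c * b = b^2 * NN + 2 * b * be * real k + 2 * b * ga + be^2 * real mu"
    using ex[of p' q'] pq' unfolding \<alpha>_def by (simp add: algebra_simps)
  have h1: "be^2 * (real k - real mu) + ga^2 = c * ga" using D N by algebra
  have "be * (be * (real la - real mu) + 2 * ga - c) = 0" using A N by algebra
  hence h2: "c = be * (real la - real mu) + 2 * ga" using bne by simp
  have h3: "(ga + be * r1) * (ga + be * r2) = 0"
    using h1 h2 r12(2) r12(3) by algebra
  have hs: "b * NN + be * real k + ga = 0"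
  proof -
    fix i
    have "0 = (\<Sum>j\<in>UNIV. b + be * \<alpha> i j + ga * of_bool (i = j))" using s0[of i] g by simp
    also have "\<dots> = b * NN + be * real k + ga"
      by (simp add: sum.distrib sum_distrib_left[symmetric] deg_sum NN_def)
    finally show ?thesis by simp
  qed
  have d1: "dgs_embedding G 1 = p1.TT" by (intro ext) (simp only: dgs(1) p1.TT_def)
  have d2: "dgs_embedding G 2 = p2.TT" by (intro ext) (simp only: dgs(2) p2.TT_def)
  from h3 consider "ga + be * r2 = 0" | "ga + be * r1 = 0" by auto
  thus ?thesis
  proof cases
    case 1
    have "same_gram z p1.TT" unfolding same_gram_def
      using p1.gram_match[OF g gz1 1 hs] by blast
    thus ?thesis using d1 by simp
  next
    case 2
    have "same_gram z p2.TT" unfolding same_gram_def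
      using p2.gram_match[OF g gz1 2 hs] by blast
    thus ?thesis using d2 by simp
  qed
qed

end

lemma frame_srg:
  fixes x :: "'v::finite \<Rightarrow> 'a::euclidean_space"
  assumes un: "\<And>i. norm (x i) = 1"
    and gr: "\<And>i j. (\<Sum>l\<in>UNIV. (x i \<bullet> x l) * (x l \<bullet> x j)) = C * (x i \<bullet> x j)"
    and two: "\<And>i j. i \<noteq> j \<Longrightarrow> x i \<bullet> x j = a \<or> x i \<bullet> x j = b"
    and ab: "a \<noteq> b" "a \<noteq> - b"
  shows "srg (\<lambda>i j. i \<noteq> j \<and> x i \<bullet> x j = a)"
proof -
  define \<Gamma> where "\<Gamma> = (\<lambda>i j. i \<noteq> j \<and> x i \<bullet> x j = a)"
  define al where "al i j = (of_bool (\<Gamma> i j) :: real)" for i j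
  define be where "be = a - b"
  define ga where "ga = 1 - b"
  define d where "d i = real (card {l. \<Gamma> i l})" for i
  define Cm where "Cm i j = real (card {l. \<Gamma> i l \<and> \<Gamma> j l})" for i j
  have sy: "\<Gamma> i j \<longleftrightarrow> \<Gamma> j i" for i j unfolding \<Gamma>_def by (auto simp: inner_commute)
  have alsy: "al i j = al j i" for i j unfolding al_def using sy by simp
  have xx: "x i \<bullet> x i = 1" for i using un[of i] by (simp add: norm_eq_1)
  have g: "x i \<bullet> x j = b + be * al i j + ga * of_bool (i = j)" for i j
    using two[of i j] xx[of i] unfolding al_def be_def ga_def \<Gamma>_def by auto
  have dsum: "(\<Sum>l\<in>UNIV. al i l) = d i" for i unfolding al_def d_def by simp
  have csum: "(\<Sum>l\<in>UNIV. al i l * al l j) = Cm i j" for i j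
    unfolding al_def Cm_def using sy by (simp add: of_bool_conj[symmetric] Int_def)
  have cdiag: "Cm i i = d i" for i unfolding Cm_def d_def by simp
  have ex: "C * (b + be * al i j + ga * of_bool (i = j)) =
      b^2 * real CARD('v) + b * be * d i + b * be * d j + 2 * b * ga
      + be^2 * Cm i j + 2 * be * ga * al i j + ga^2 * of_bool (i = j)" for i j
  proof -
    have "C * (b + be * al i j + ga * of_bool (i = j)) = (\<Sum>l\<in>UNIV. (x i \<bullet> x l) * (x l \<bullet> x j))"
      using gr g by simp
    also have "\<dots> = (\<Sum>l\<in>UNIV. (b + be * al i l + ga * of_bool (i = l)) * (b + be * al l j + ga * of_bool (l = j)))"
      by (simp only: g)
    also have "\<dots> = b^2 * real CARD('v) + b * be * d i + b * be * d j + 2 * b * ga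
      + be^2 * Cm i j + 2 * be * ga * al i j + ga^2 * of_bool (i = j)"
      unfolding expand9[of al, OF alsy] dsum csum ..
    finally show ?thesis .
  qed
  have irr: "\<not> \<Gamma> i i" for i unfolding \<Gamma>_def by simp
  have ne: "(2 * b * be + be^2) \<noteq> 0"
  proof -
    have "2 * b * be + be^2 = (a - b) * (a + b)" unfolding be_def by (simp add: algebra_simps power2_eq_square)
    moreover have "a + b \<noteq> 0" using ab(2) by linarith
    ultimately show ?thesis using ab(1) by simp
  qed
  have dconst: "d i = d j" for i j
  proof -
    have "(2 * b * be + be^2) * d i = C * (b + ga) - b^2 * real CARD('v) - 2 * b * ga - ga^2" for i
      using ex[of i i] cdiag[of i] irr[of i] unfolding al_def by (simp add: algebra_simps)
    hence "(2 * b * be + be^2) * d i = (2 * b * be + be^2) * d j" by metis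
    thus ?thesis using ne by simp
  qed
  define k where "k = card {l. \<Gamma> undefined l}"
  have kk: "card {w. \<Gamma> u w} = k" for u using dconst[of u undefined] unfolding d_def k_def by simp
  have adjc: "Cm u w = Cm u' w'" if "u \<noteq> w" "\<Gamma> u w" "u' \<noteq> w'" "\<Gamma> u' w'" for u w u' w'
  proof -
    have "be^2 * Cm i j = C * (b + be) - b^2 * real CARD('v) - 2 * b * be * d i - 2 * b * ga - 2 * be * ga"
      if "i \<noteq> j" "\<Gamma> i j" for i j
      using ex[of i j] that dconst[of j i] unfolding al_def by (simp add: algebra_simps)
    hence "be^2 * Cm u w = be^2 * Cm u' w'" using that dconst[of u u'] by simp
    thus ?thesis using ab(1) be_def by simp
  qed
  have nadjc: "Cm u w = Cm u' w'" if "u \<noteq> w" "\<not> \<Gamma> u w" "u' \<noteq> w'" "\<not> \<Gamma> u' w'" for u w u' w'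
  proof -
    have "be^2 * Cm i j = C * b - b^2 * real CARD('v) - 2 * b * be * d i - 2 * b * ga"
      if "i \<noteq> j" "\<not> \<Gamma> i j" for i j
      using ex[of i j] that dconst[of j i] unfolding al_def by (simp add: algebra_simps)
    hence "be^2 * Cm u w = be^2 * Cm u' w'" using that dconst[of u u'] by simp
    thus ?thesis using ab(1) be_def by simp
  qed
  obtain la where la: "\<forall>u w. u \<noteq> w \<and> \<Gamma> u w \<longrightarrow> card {z. \<Gamma> u z \<and> \<Gamma> w z} = la"
  proof (cases "\<exists>u w. u \<noteq> w \<and> \<Gamma> u w")
    case True
    then obtain u0 w0 where "u0 \<noteq> w0" "\<Gamma> u0 w0" by blast
    thus ?thesis using that[of "card {z. \<Gamma> u0 z \<and> \<Gamma> w0 z}"] adjc unfolding Cm_def by (metis of_nat_eq_iff)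
  next
    case False thus ?thesis using that by blast
  qed
  obtain mu where mu: "\<forall>u w. u \<noteq> w \<and> \<not> \<Gamma> u w \<longrightarrow> card {z. \<Gamma> u z \<and> \<Gamma> w z} = mu"
  proof (cases "\<exists>u w. u \<noteq> w \<and> \<not> \<Gamma> u w")
    case True
    then obtain u0 w0 where "u0 \<noteq> w0" "\<not> \<Gamma> u0 w0" by blast
    thus ?thesis using that[of "card {z. \<Gamma> u0 z \<and> \<Gamma> w0 z}"] nadjc unfolding Cm_def by (metis of_nat_eq_iff)
  next
    case False thus ?thesis using that by blast
  qed
  show ?thesis unfolding \<Gamma>_def[symmetric] srg_def
    using sy irr kk la mu by blast
qed


lemma simplex_props:
  fixes T :: "'w::finite \<Rightarrow> 'b::euclidean_space"
  assumes N2: "CARD('w) \<ge> 2" and sg: "simplex_gram T"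
  shows "spherical_2design_on (span (range T)) T \<and> two_distance_tight_frame_on (span (range T)) T
     \<and> lifting_property T"
proof -
  define N where "N = real CARD('w)"
  define q where "q = - 1 / (N - 1)"
  define p where "p = N / (N - 1)"
  have N1: "N - 1 > 0" using N2 unfolding N_def by simp
  have g: "T i \<bullet> T j = q + 0 * (\<lambda>_ _. 0::real) i j + p * of_bool (i = j)" for i j
  proof -
    have g0: "T i \<bullet> T j = (if i = j then 1 else q)" using sg unfolding simplex_gram_def q_def N_def by simp
    have "q + p = (- 1 + N) / (N - 1)" unfolding q_def p_def by (simp only: add_divide_distrib)
    also have "\<dots> = 1" using N1 by simp
    finally have "q + p = 1" .
    thus ?thesis using g0 by auto
  qed
  have "p = - N * q" unfolding q_def p_def by simp
  hence qp: "N * q + p = 0" by simp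
  have pp: "p > 0" unfolding p_def using N1 by (simp add: N_def)
  have sq: "\<forall>i j. (\<Sum>l\<in>UNIV. (T i \<bullet> T l) * (T l \<bullet> T j)) = p * (T i \<bullet> T j)"
  proof (intro allI)
    fix i j
    have "(\<Sum>l\<in>UNIV. (T i \<bullet> T l) * (T l \<bullet> T j)) =
      (\<Sum>l\<in>UNIV. (q + 0 * (\<lambda>_ _. 0::real) i l + p * of_bool (i = l)) * (q + 0 * (\<lambda>_ _. 0::real) l j + p * of_bool (l = j)))"
      by (simp only: g)
    also have "\<dots> = q^2 * N + 2 * q * p + p^2 * of_bool (i = j)"
      by (subst expand9) (auto simp: N_def)
    also have "\<dots> = p * (q + p * of_bool (i = j))"
    proof -
      have "q^2 * N + 2 * q * p = q * (N * q + p) + p * q" by (simp add: algebra_simps power2_eq_square)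
      also have "\<dots> = p * q" using qp by simp
      finally show ?thesis by (simp add: algebra_simps power2_eq_square)
    qed
    finally show "(\<Sum>l\<in>UNIV. (T i \<bullet> T l) * (T l \<bullet> T j)) = p * (T i \<bullet> T j)" using g by simp
  qed
  have un: "norm (T i) = 1" for i using sg unfolding simplex_gram_def by (simp add: norm_eq_1)
  have tf: "tight_frame_on (span (range T)) T"
    unfolding tight_frame_on_def unit_in_def
    using un gram_frame[OF sq] pp by (auto intro: span_base)
  have s0: "(\<Sum>i\<in>UNIV. T i) = 0"
  proof -
    have "(\<Sum>i\<in>UNIV. T i) \<bullet> (\<Sum>i\<in>UNIV. T i) = (\<Sum>i\<in>UNIV. \<Sum>j\<in>UNIV. q + p * of_bool (j = (i::'w)))"
      by (simp add: inner_sum_left inner_sum_right g)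
    also have "\<dots> = N * (N * q + p)" by (simp add: sum.distrib N_def algebra_simps)
    also have "\<dots> = 0" using qp by simp
    finally show ?thesis by simp
  qed
  have td: "two_distance T"
    unfolding two_distance_def using un sg unfolding simplex_gram_def by auto
  show ?thesis
    using frame_design[OF subspace_span tf s0] tf td lifting[OF tf s0 td]
    unfolding two_distance_tight_frame_on_def by blast
qed


lemma part1:
  fixes x :: "'v::finite \<Rightarrow> 'a::euclidean_space" and a b :: real
  assumes N2: "CARD('v) \<ge> 2" and inj: "inj x" and tf: "tight_frame_on UNIV x"
    and two: "\<forall>i j. i \<noteq> j \<longrightarrow> x i \<bullet> x j = a \<or> x i \<bullet> x j = b" and ab: "a \<noteq> b" "a \<noteq> - b"
  shows "(let \<Gamma>1 = (\<lambda>i j. i \<noteq> j \<and> x i \<bullet> x j = a); s = (\<Sum>i\<in>UNIV. x i);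
           N = real CARD('v); n = real DIM('a) in
        srg \<Gamma>1 \<and>
        (s = 0 \<longrightarrow> design_type UNIV x \<Gamma>1) \<and>
        (s \<noteq> 0 \<longrightarrow>
           (norm s)^2 = N^2 / n \<and>
           (let y = (\<lambda>i. (1 / sqrt (1 - 1 / n)) *\<^sub>R (x i - (1 / N) *\<^sub>R s)) in
              two_distance y \<and> design_type {v. v \<bullet> s = 0} y \<Gamma>1)))"
proof -
  define \<Gamma> where "\<Gamma> = (\<lambda>i j. i \<noteq> j \<and> x i \<bullet> x j = a)"
  define s where "s = (\<Sum>i\<in>UNIV. x i)"
  define N where "N = real CARD('v)"
  define n where "n = real DIM('a)"
  obtain C where C: "C > 0" "\<forall>v\<in>UNIV. (\<Sum>i\<in>UNIV. (v \<bullet> x i)^2) = C * (norm v)^2"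
    using tf unfolding tight_frame_on_def by blast
  have uU: "unit_in UNIV x" using tf unfolding tight_frame_on_def by blast
  have un: "norm (x i) = 1" for i using uU unfolding unit_in_def by blast
  have xx: "x i \<bullet> x i = 1" for i using un[of i] by (simp add: norm_eq_1)
  have gr: "(\<Sum>l\<in>UNIV. (x i \<bullet> x l) * (x l \<bullet> x j)) = C * (x i \<bullet> x j)" for i j
    by (rule frame_gram[OF subspace_UNIV _ C(2)]) simp
  have srgG: "srg \<Gamma>" unfolding \<Gamma>_def
    by (rule frame_srg[OF un gr _ ab]) (use two in blast)
  have dimC: "C * n = N" unfolding n_def N_def using frame_dim[OF subspace_UNIV uU C(2)] by simp
  obtain k la mu where sr: "\<forall>u w. \<Gamma> u w \<longleftrightarrow> \<Gamma> w u" "\<forall>u. \<not> \<Gamma> u u"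
    "\<forall>u. card {w. \<Gamma> u w} = k"
    "\<forall>u w. u \<noteq> w \<and> \<Gamma> u w \<longrightarrow> card {z. \<Gamma> u z \<and> \<Gamma> w z} = la"
    "\<forall>u w. u \<noteq> w \<and> \<not> \<Gamma> u w \<longrightarrow> card {z. \<Gamma> u z \<and> \<Gamma> w z} = mu"
    using srgG unfolding srg_def by blast
  have loc: "srgc \<Gamma> k la mu" if "\<not> complete_graph \<Gamma>" "\<not> empty_graph \<Gamma>"
    using sr that by unfold_locales auto
  define be where "be = a - b"
  define ga where "ga = 1 - b"
  have g: "x i \<bullet> x j = b + be * of_bool (\<Gamma> i j) + ga * of_bool (i = j)" for i j
    using two xx[of i] unfolding be_def ga_def \<Gamma>_def by auto
  have gz: "x i \<bullet> x j = (if i = j then 1 else if \<Gamma> i j then a else b)" for i j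
    using two xx[of i] unfolding \<Gamma>_def by auto
  define \<rho> where "\<rho> = b * N + be * real k + ga"
  have rowsum: "(\<Sum>j\<in>UNIV. x i \<bullet> x j) = \<rho>" for i
  proof -
    have "(\<Sum>j\<in>UNIV. x i \<bullet> x j) = (\<Sum>j\<in>UNIV. b + be * of_bool (\<Gamma> i j) + ga * of_bool (i = j))"
      by (simp only: g)
    also have "\<dots> = \<rho>" using sr(3) unfolding \<rho>_def N_def
      by (simp add: sum.distrib sum_distrib_left[symmetric])
    finally show ?thesis .
  qed
  have xs: "x i \<bullet> s = \<rho>" for i unfolding s_def by (simp add: inner_sum_right rowsum)
  have ss: "s \<bullet> s = N * \<rho>"
  proof -
    have "s \<bullet> s = (\<Sum>i\<in>UNIV. x i \<bullet> s)" using inner_sum_left[of x UNIV s] by (simp add: s_def[symmetric])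
    thus ?thesis by (simp add: xs N_def)
  qed
  have rho2: "\<rho> * \<rho> = C * \<rho>"
  proof -
    fix i
    have "(\<Sum>j\<in>UNIV. \<Sum>l\<in>UNIV. (x i \<bullet> x l) * (x l \<bullet> x j)) = (\<Sum>l\<in>UNIV. (x i \<bullet> x l) * \<rho>)"
      by (subst sum.swap) (simp add: sum_distrib_left[symmetric] rowsum)
    also have "\<dots> = \<rho> * \<rho>" by (simp add: sum_distrib_right[symmetric] rowsum)
    finally have "\<rho> * \<rho> = (\<Sum>j\<in>UNIV. C * (x i \<bullet> x j))" using gr by simp
    also have "\<dots> = C * \<rho>" by (simp add: sum_distrib_left[symmetric] rowsum)
    finally show ?thesis .
  qed
  have part0: "design_type UNIV x \<Gamma>" if s0: "s = 0"
  proof -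
    have "spherical_2design_on UNIV x" using frame_design[OF subspace_UNIV tf] s0 s_def by simp
    moreover have "same_gram x (dgs_embedding \<Gamma> 1) \<or> same_gram x (dgs_embedding \<Gamma> 2) \<or> simplex_gram x"
      if "\<not> complete_graph \<Gamma>" "\<not> empty_graph \<Gamma>"
    proof -
      interpret srgc \<Gamma> k la mu by (rule loc[OF that])
      have "(\<Sum>j\<in>UNIV. x i \<bullet> x j) = 0" for i using s0 unfolding s_def by (simp add: inner_sum_right[symmetric])
      thus ?thesis using design_gram[OF gz ab(1) gr] by blast
    qed
    ultimately show ?thesis unfolding design_type_def by blast
  qed
  have partS: "(norm s)^2 = N^2 / n \<and>
           (let y = (\<lambda>i. (1 / sqrt (1 - 1 / n)) *\<^sub>R (x i - (1 / N) *\<^sub>R s)) in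
              two_distance y \<and> design_type {v. v \<bullet> s = 0} y \<Gamma>)" if sn: "s \<noteq> 0"
  proof -
    have Npos: "N > 0" unfolding N_def by simp
    have npos: "n > 0" unfolding n_def by simp
    have "s \<bullet> s \<noteq> 0" using sn by simp
    hence "\<rho> \<noteq> 0" using ss by simp
    hence rC: "\<rho> = C" using rho2 by simp
    have CN: "C = N / n" using dimC npos by (simp add: eq_divide_eq)
    have ns: "(norm s)^2 = N^2 / n"
      unfolding power2_norm_eq_inner ss rC CN by (simp add: power2_eq_square)
    have n1: "n > 1"
    proof (rule ccontr)
      assume "\<not> n > 1"
      moreover have "n \<ge> 1" unfolding n_def using DIM_positive[where 'a='a] by linarith
      ultimately have n1: "n = 1" by simp
      hence rN: "\<rho> = N" using rC CN by simp
      obtain i j :: 'v where ij: "i \<noteq> j"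
      proof -
        have "\<not> (\<forall>i j::'v. i = j)"
        proof
          assume "\<forall>i j::'v. i = j"
          hence "UNIV \<subseteq> {undefined::'v}" by blast
          hence "CARD('v) \<le> card {undefined::'v}" by (intro card_mono) auto
          hence "CARD('v) \<le> 1" by simp
          thus False using N2 by simp
        qed
        thus ?thesis using that by blast
      qed
      have le1: "x i \<bullet> x l \<le> 1" for l using norm_cauchy_schwarz[of "x i" "x l"] un by simp
      have lt1: "x i \<bullet> x j < 1"
      proof -
        have "x i \<bullet> x j \<noteq> 1"
        proof
          assume e: "x i \<bullet> x j = 1"
          have "(norm (x i - x j))^2 = 0"
            unfolding power2_norm_eq_inner by (simp add: inner_diff_left inner_diff_right xx e inner_commute)
          hence "x i = x j" by simp
          thus False using inj ij by (simp add: inj_eq)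
        qed
        thus ?thesis using le1[of j] by simp
      qed
      have "(\<Sum>l\<in>UNIV. x i \<bullet> x l) < (\<Sum>l\<in>(UNIV::'v set). (1::real))"
        using sum_strict_mono_ex1[of UNIV "\<lambda>l. x i \<bullet> x l" "\<lambda>l. 1"] le1 lt1 by auto
      hence "\<rho> < N" using rowsum unfolding N_def by simp
      thus False using rN by simp
    qed
    define \<sigma> where "\<sigma> = sqrt (1 - 1 / n)"
    have s2: "\<sigma>^2 = 1 - 1 / n" unfolding \<sigma>_def using n1 by simp
    have spos: "\<sigma> > 0" unfolding \<sigma>_def using n1 by simp
    define y where "y i = (1 / \<sigma>) *\<^sub>R (x i - (1 / N) *\<^sub>R s)" for i
    have rN: "\<rho> / N = 1 / n" unfolding rC CN using Npos by simp
    have yy: "y i \<bullet> y j = (x i \<bullet> x j - 1 / n) / \<sigma>^2" for i j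
    proof -
      have "(x i - (1 / N) *\<^sub>R s) \<bullet> (x j - (1 / N) *\<^sub>R s) = x i \<bullet> x j - \<rho> / N - \<rho> / N + (s \<bullet> s) / N^2"
      proof -
        have sx: "s \<bullet> x j = \<rho>" using xs[of j] by (simp add: inner_commute)
        show ?thesis by (simp add: inner_diff_left inner_diff_right xs sx power2_eq_square algebra_simps)
      qed
      also have "(s \<bullet> s) / N^2 = \<rho> / N" unfolding ss using Npos by (simp add: power2_eq_square)
      finally have "(x i - (1 / N) *\<^sub>R s) \<bullet> (x j - (1 / N) *\<^sub>R s) = x i \<bullet> x j - 1 / n"
        unfolding rN by simp
      thus ?thesis unfolding y_def by (simp add: power2_eq_square)
    qed
    have yun: "norm (y i) = 1" for i
    proof -
      have "y i \<bullet> y i = 1" using yy[of i i] xx s2 spos n1 by simp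
      thus ?thesis by (simp add: norm_eq_1)
    qed
    have ys: "y i \<bullet> s = 0" for i
    proof -
      have "(x i - (1 / N) *\<^sub>R s) \<bullet> s = \<rho> - (s \<bullet> s) / N" by (simp add: inner_diff_left xs)
      also have "\<dots> = 0" unfolding ss using Npos by simp
      finally show ?thesis unfolding y_def by simp
    qed
    have sumy: "(\<Sum>i\<in>UNIV. y i) = 0"
    proof -
      have "(\<Sum>i\<in>UNIV. x i - (1 / N) *\<^sub>R s) = s - (N * (1 / N)) *\<^sub>R s"
        by (simp add: sum_subtractf sum_constant_scaleR s_def N_def)
      also have "\<dots> = 0" using Npos by simp
      finally show ?thesis unfolding y_def by (simp add: scaleR_sum_right[symmetric])
    qed
    define H where "H = {v. v \<bullet> s = 0}"
    have Hsub: "subspace H" unfolding H_def by (rule subspace_hyperplane2)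
    have yfr: "\<forall>v\<in>H. (\<Sum>i\<in>UNIV. (v \<bullet> y i)^2) = (C / \<sigma>^2) * (norm v)^2"
    proof
      fix v assume "v \<in> H"
      hence vs: "v \<bullet> s = 0" unfolding H_def by simp
      have "v \<bullet> y i = (v \<bullet> x i) / \<sigma>" for i unfolding y_def by (simp add: inner_diff_right vs)
      hence "(\<Sum>i\<in>UNIV. (v \<bullet> y i)^2) = (\<Sum>i\<in>UNIV. (v \<bullet> x i)^2) / \<sigma>^2"
        by (simp add: power_divide sum_divide_distrib)
      also have "\<dots> = (C / \<sigma>^2) * (norm v)^2" using C(2) by simp
      finally show "(\<Sum>i\<in>UNIV. (v \<bullet> y i)^2) = (C / \<sigma>^2) * (norm v)^2" .
    qed
    have yH: "\<forall>i. y i \<in> H" unfolding H_def using ys by simp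
    have ytf: "tight_frame_on H y"
      unfolding tight_frame_on_def unit_in_def
      using yun yH yfr C(1) spos by (intro conjI exI[of _ "C / \<sigma>^2"]) auto
    have ytd: "two_distance y"
      unfolding two_distance_def using yun yy two
      by (intro conjI exI[of _ "(a - 1 / n) / \<sigma>^2"] exI[of _ "(b - 1 / n) / \<sigma>^2"]) auto
    have ydes: "design_type H y \<Gamma>"
    proof -
      have "spherical_2design_on H y" by (rule frame_design[OF Hsub ytf sumy])
      moreover have "same_gram y (dgs_embedding \<Gamma> 1) \<or> same_gram y (dgs_embedding \<Gamma> 2) \<or> simplex_gram y"
        if "\<not> complete_graph \<Gamma>" "\<not> empty_graph \<Gamma>"
      proof -
        interpret srgc \<Gamma> k la mu by (rule loc[OF that])
        have gzy: "y i \<bullet> y j = (if i = j then 1 else if \<Gamma> i j then (a - 1 / n) / \<sigma>^2 else (b - 1 / n) / \<sigma>^2)" for i j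
          using yy[of i j] gz[of i j] yun[of i] by (auto simp: norm_eq_1)
        have abn: "(a - 1 / n) / \<sigma>^2 \<noteq> (b - 1 / n) / \<sigma>^2" using ab(1) spos by (simp add: divide_cancel_right)
        have sqy: "(\<Sum>l\<in>UNIV. (y i \<bullet> y l) * (y l \<bullet> y j)) = (C / \<sigma>^2) * (y i \<bullet> y j)" for i j
          by (rule frame_gram[OF Hsub yH yfr])
        have "(\<Sum>j\<in>UNIV. y i \<bullet> y j) = 0" for i using sumy by (simp add: inner_sum_right[symmetric])
        thus ?thesis using design_gram[OF gzy abn sqy] by blast
      qed
      ultimately show ?thesis unfolding design_type_def by blast
    qed
    show ?thesis using ns ytd ydes unfolding Let_def y_def H_def \<sigma>_def by simp
  qed
  show ?thesis
    using srgG part0 partS unfolding Let_def \<Gamma>_def s_def N_def n_def by blast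
qed


theorem mainTheorem1:
  shows
  "(\<forall>(x :: 'v::finite \<Rightarrow> 'a::euclidean_space) (a::real) b.
      CARD('v) \<ge> 2 \<and> inj x \<and> tight_frame_on UNIV x \<and>
      (\<forall>i j. i \<noteq> j \<longrightarrow> x i \<bullet> x j = a \<or> x i \<bullet> x j = b) \<and> a \<noteq> b \<and> a \<noteq> - b
      \<longrightarrow>
      (let \<Gamma>1 = (\<lambda>i j. i \<noteq> j \<and> x i \<bullet> x j = a); s = (\<Sum>i\<in>UNIV. x i);
           N = real CARD('v); n = real DIM('a) in
        srg \<Gamma>1 \<and>
        (s = 0 \<longrightarrow> design_type UNIV x \<Gamma>1) \<and>
        (s \<noteq> 0 \<longrightarrow>
           (norm s)^2 = N^2 / n \<and>
           (let y = (\<lambda>i. (1 / sqrt (1 - 1 / n)) *\<^sub>R (x i - (1 / N) *\<^sub>R s)) in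
              two_distance y \<and> design_type {v. v \<bullet> s = 0} y \<Gamma>1))))
   \<and>
   (\<forall>\<Gamma>1 :: 'w::finite \<Rightarrow> 'w \<Rightarrow> bool.
      srg \<Gamma>1 \<and> \<not> complete_graph \<Gamma>1 \<and> \<not> empty_graph \<Gamma>1 \<longrightarrow>
      (\<forall>j\<in>{1, 2}. let T = dgs_embedding \<Gamma>1 j; V = span (range T) in
          spherical_2design_on V T \<and> two_distance_tight_frame_on V T \<and> lifting_property T) \<and>
      (\<forall>T :: 'w \<Rightarrow> 'b::euclidean_space. simplex_gram T \<longrightarrow>
          (let V = span (range T) in
           spherical_2design_on V T \<and> two_distance_tight_frame_on V T \<and> lifting_property T)))"
  proof (intro conjI allI impI ballI)
  fix x :: "'v::finite \<Rightarrow> 'a::euclidean_space" and a b :: real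
  assume h: "CARD('v) \<ge> 2 \<and> inj x \<and> tight_frame_on UNIV x \<and>
      (\<forall>i j. i \<noteq> j \<longrightarrow> x i \<bullet> x j = a \<or> x i \<bullet> x j = b) \<and> a \<noteq> b \<and> a \<noteq> - b"
  show "let \<Gamma>1 = (\<lambda>i j. i \<noteq> j \<and> x i \<bullet> x j = a); s = (\<Sum>i\<in>UNIV. x i);
           N = real CARD('v); n = real DIM('a) in
        srg \<Gamma>1 \<and>
        (s = 0 \<longrightarrow> design_type UNIV x \<Gamma>1) \<and>
        (s \<noteq> 0 \<longrightarrow>
           (norm s)^2 = N^2 / n \<and>
           (let y = (\<lambda>i. (1 / sqrt (1 - 1 / n)) *\<^sub>R (x i - (1 / N) *\<^sub>R s)) in
              two_distance y \<and> design_type {v. v \<bullet> s = 0} y \<Gamma>1))"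
    using part1[of x a b] h by blast
next
  fix \<Gamma>1 :: "'w::finite \<Rightarrow> 'w \<Rightarrow> bool" and j :: nat
  assume h: "srg \<Gamma>1 \<and> \<not> complete_graph \<Gamma>1 \<and> \<not> empty_graph \<Gamma>1" and j: "j \<in> {1, 2}"
  obtain k la mu where sr: "\<forall>u w. \<Gamma>1 u w \<longleftrightarrow> \<Gamma>1 w u" "\<forall>u. \<not> \<Gamma>1 u u"
    "\<forall>u. card {w. \<Gamma>1 u w} = k"
    "\<forall>u w. u \<noteq> w \<and> \<Gamma>1 u w \<longrightarrow> card {z. \<Gamma>1 u z \<and> \<Gamma>1 w z} = la"
    "\<forall>u w. u \<noteq> w \<and> \<not> \<Gamma>1 u w \<longrightarrow> card {z. \<Gamma>1 u z \<and> \<Gamma>1 w z} = mu"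
    using h unfolding srg_def by blast
  interpret srgc \<Gamma>1 k la mu using sr h by unfold_locales auto
  have d1: "dgs_embedding \<Gamma>1 1 = p1.TT" by (intro ext) (simp only: dgs(1) p1.TT_def)
  have d2: "dgs_embedding \<Gamma>1 2 = p2.TT" by (intro ext) (simp only: dgs(2) p2.TT_def)
  show "let T = dgs_embedding \<Gamma>1 j; V = span (range T) in
          spherical_2design_on V T \<and> two_distance_tight_frame_on V T \<and> lifting_property T"
    using j p1.TT_props p2.TT_props d1 d2 unfolding Let_def by auto
next
  fix \<Gamma>1 :: "'w::finite \<Rightarrow> 'w \<Rightarrow> bool" and T :: "'w \<Rightarrow> 'b::euclidean_space"
  assume h: "srg \<Gamma>1 \<and> \<not> complete_graph \<Gamma>1 \<and> \<not> empty_graph \<Gamma>1" and sg: "simplex_gram T"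
  obtain p q :: 'w where pq: "p \<noteq> q" using h unfolding complete_graph_def by blast
  have "card {p, q} \<le> CARD('w)" by (intro card_mono) auto
  hence N2: "CARD('w) \<ge> 2" using pq by simp
  show "let V = span (range T) in
           spherical_2design_on V T \<and> two_distance_tight_frame_on V T \<and> lifting_property T"
    using simplex_props[OF N2 sg] unfolding Let_def by blast
qed

end
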